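(* Let $H=(V,E,C,\ell)$ be an edge-colored graph with $k$ colors, $x$ a feasible solution of the \textsc{MinECC} LP relaxation, $e=\{u,v\}\in E$ with color $c$ and $x_e=\max\{x_u^c,x_v^c\}$, and $z_0,z_1,\dots$ the color thresholds of $e$. Let $Y$ be the output of GenColorRound applied to $x$ with $I=(\frac12,\frac78)$. Suppose $x_e\in(\frac18,\frac12)$ and there are integers $1\le p\le q$ with $z_{p-1}\le\frac12\le z_p\le z_q\le\frac78\le z_{q+1}$. Then $p=1$, $q\le 6$, and $\Pr[e\in\mathcal M_Y]\le\frac83A_q\,x_e$, where $A_q$ is the optimal value of the linear program in real variables $\omega_1,\dots,\omega_6,\chi$: maximize $\frac{q}{q+1}\cdot\frac78\chi-\sum_{j=1}^q\frac{1}{j(j+1)}\omega_j$ subject to $\omega_i\le\omega_{i+1}$ for $i=1,\dots,5$; $\chi-\omega_1\le1$; $2\chi-\omega_2-\omega_3\le1$; $3\chi-3\omega_5\le1$; $\chi\ge 2$; $\omega_q\le\frac78\chi$.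
   Context: An edge-colored graph is $H=(V,E,C,\ell)$ with colors $C=[k]$, $\ell\colon E\to C$, where every edge is a set of exactly two nodes. A node coloring $Y\colon V\to C$ makes a mistake at $e$ ($e\in\mathcal M_Y$) if some $w\in e$ has $Y[w]\ne\ell(e)$. The \textsc{MinECC} LP relaxation constraints: $\sum_{i=1}^k x_w^i=k-1$ for all $w\in V$; $x_e\ge x_w^{\ell(e)}$ for $w\in e$; $0\le x_w^i\le1$; $0\le x_e\le 1$. Color thresholds of $e$ with color $c$: for $j\in C\setminus\{c\}$ let $m_j=\min_{w\in e}x_w^j$, sorted as $m_{(1)}\le\dots\le m_{(k-1)}$; $z_0=0$, $z_i=m_{(i)}$ for $1\le i\le k-1$, and by convention $z_i=1$ for $i\ge k$. GenColorRound with interval $I$, applied to $x$: draw $\rho$ uniformly from $I$ and, independently, a uniformly random permutation $\pi$ of $[k]$; let $S_i=\{w: x_w^i<\rho\}$; for $w\in\bigcup_iS_i$ set $Y[w]=\pi(j)$ with $j$ the largest index such that $w\in S_{\pi(j)}$; other nodes get an arbitrary color. *)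

theory Defs
  imports "HOL-Analysis.Analysis" "HOL-Combinatorics.Permutations"
begin

definition edge_colored_graph ::
  "'v set \<Rightarrow> 'v set set \<Rightarrow> nat \<Rightarrow> ('v set \<Rightarrow> nat) \<Rightarrow> bool" where
  "edge_colored_graph V E k ell \<longleftrightarrow>
     finite V \<and> (\<forall>e\<in>E. e \<subseteq> V \<and> card e = 2 \<and> ell e \<in> {1..k})"

text \<open>Feasibility for the MinECC LP relaxation; x w i is x_w^i, xE e is x_e.\<close>

definition MinECC_LP_feasible ::
  "'v set \<Rightarrow> 'v set set \<Rightarrow> nat \<Rightarrow> ('v set \<Rightarrow> nat) \<Rightarrow>
   ('v \<Rightarrow> nat \<Rightarrow> real) \<Rightarrow> ('v set \<Rightarrow> real) \<Rightarrow> bool" where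
  "MinECC_LP_feasible V E k ell x xE \<longleftrightarrow>
     (\<forall>w\<in>V. (\<Sum>i=1..k. x w i) = real k - 1) \<and>
     (\<forall>e\<in>E. \<forall>w\<in>e. xE e \<ge> x w (ell e)) \<and>
     (\<forall>w\<in>V. \<forall>i\<in>{1..k}. 0 \<le> x w i \<and> x w i \<le> 1) \<and>
     (\<forall>e\<in>E. 0 \<le> xE e \<and> xE e \<le> 1)"

definition color_thresholds ::
  "nat \<Rightarrow> ('v \<Rightarrow> nat \<Rightarrow> real) \<Rightarrow> 'v set \<Rightarrow> nat \<Rightarrow> nat \<Rightarrow> real" where
  "color_thresholds k x e c i =
     (let ms = sort (map (\<lambda>j. Min ((\<lambda>w. x w j) ` e)) (filter (\<lambda>j. j \<noteq> c) [1..<k+1]))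
      in if i = 0 then 0 else if i \<le> k - 1 then ms ! (i - 1) else 1)"

text \<open>Output of GenColorRound for a fixed threshold rho and permutation pi of {1..k};
  uncovered nodes w receive the (arbitrary) color dflt w.\<close>

definition GenColorRound ::
  "nat \<Rightarrow> ('v \<Rightarrow> nat \<Rightarrow> real) \<Rightarrow> ('v \<Rightarrow> nat) \<Rightarrow> real \<Rightarrow> (nat \<Rightarrow> nat) \<Rightarrow> 'v \<Rightarrow> nat" where
  "GenColorRound k x dflt \<rho> \<pi> w =
     (if \<exists>i\<in>{1..k}. x w i < \<rho>
      then \<pi> (GREATEST j. j \<in> {1..k} \<and> x w (\<pi> j) < \<rho>)
      else dflt w)"

text \<open>Probability of an event P rho pi when rho is uniform on the open interval (a,b) and,
  independently, pi is a uniformly random permutation of {1..k}.\<close>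

definition GCR_prob :: "nat \<Rightarrow> real \<Rightarrow> real \<Rightarrow> (real \<Rightarrow> (nat \<Rightarrow> nat) \<Rightarrow> bool) \<Rightarrow> real" where
  "GCR_prob k a b P =
     (\<Sum>\<pi>\<in>{\<pi>. \<pi> permutes {1..k}}. measure lborel {\<rho>\<in>{a<..<b}. P \<rho> \<pi>} / (b - a)) / fact k"

definition mistake :: "('v \<Rightarrow> nat) \<Rightarrow> ('v set \<Rightarrow> nat) \<Rightarrow> 'v set \<Rightarrow> bool" where
  "mistake Y ell e \<longleftrightarrow> (\<exists>w\<in>e. Y w \<noteq> ell e)"

text \<open>The auxiliary LP in variables omega_1..omega_6, chi (written kappa), and its optimal value A_q.\<close>

definition lemma4_LP_feasible :: "nat \<Rightarrow> (nat \<Rightarrow> real) \<Rightarrow> real \<Rightarrow> bool" where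
  "lemma4_LP_feasible q \<omega> \<kappa> \<longleftrightarrow>
     (\<forall>i\<in>{1..5}. \<omega> i \<le> \<omega> (i + 1)) \<and>
     \<kappa> - \<omega> 1 \<le> 1 \<and> 2 * \<kappa> - \<omega> 2 - \<omega> 3 \<le> 1 \<and> 3 * \<kappa> - 3 * \<omega> 5 \<le> 1 \<and>
     \<kappa> \<ge> 2 \<and> \<omega> q \<le> 7/8 * \<kappa>"

definition lemma4_LP_obj :: "nat \<Rightarrow> (nat \<Rightarrow> real) \<Rightarrow> real \<Rightarrow> real" where
  "lemma4_LP_obj q \<omega> \<kappa> =
     real q / (real q + 1) * (7/8) * \<kappa> - (\<Sum>j=1..q. \<omega> j / (real j * (real j + 1)))"

definition A_LP :: "nat \<Rightarrow> real" where
  "A_LP q = Sup {lemma4_LP_obj q \<omega> \<kappa> | \<omega> \<kappa>. lemma4_LP_feasible q \<omega> \<kappa>}"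

end

theory Submission
  imports Defs
begin

lemma telescope: "(\<Sum>i=1..n. 1/(real i*(real i+1))) = real n/(real n+1)"
proof (induction n)
  case 0 then show ?case by simp
next
  case (Suc n)
  have p1: "real n + 1 > 0" and p2: "real n + 2 > 0" by auto
  have "(\<Sum>i=1..Suc n. 1/(real i*(real i+1))) = real n/(real n+1) + 1/((real n+1)*(real n+2))"
    using Suc by (simp add: add.commute)
  also have "\<dots> = (real n+1)/(real n+2)"
    using p1 p2 by (simp add: divide_simps) (simp add: algebra_simps)
  finally show ?case by (simp add: add.commute)
qed

lemma downclosed:
  fixes D :: "nat set"
  assumes "finite D" "\<And>i. i \<in> D \<Longrightarrow> 1 \<le> i" "\<And>i i'. i \<in> D \<Longrightarrow> 1 \<le> i' \<Longrightarrow> i' \<le> i \<Longrightarrow> i' \<in> D"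
  shows "D = {1..card D}"
proof (cases "D = {}")
  case True then show ?thesis by simp
next
  case False
  define M where "M = Max D"
  have "D = {1..M}"
  proof
    show "D \<subseteq> {1..M}"
    proof
      fix i assume i: "i \<in> D"
      then have "1 \<le> i" by (rule assms(2))
      moreover have "i \<le> M" unfolding M_def using Max_ge[OF assms(1) i] .
      ultimately show "i \<in> {1..M}" by simp
    qed
    show "{1..M} \<subseteq> D"
    proof
      fix i assume i: "i \<in> {1..M}"
      have "M \<in> D" unfolding M_def using Max_in[OF assms(1) False] .
      then show "i \<in> D" using assms(3)[of M i] i by simp
    qed
  qed
  then show ?thesis by simp
qed

lemma GCR_char:
  assumes pi: "\<pi> permutes {1..k}" and c: "c \<in> {1..k}" and xc: "x w c < \<rho>"
  shows "GenColorRound k x dflt \<rho> \<pi> w = c \<longleftrightarrow> (\<forall>j\<in>{1..k}. j \<noteq> c \<and> x w j < \<rho> \<longrightarrow> inv \<pi> j < inv \<pi> c)"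
proof -
  define ic where "ic = inv \<pi> c"
  have piinv: "\<And>j. \<pi> (inv \<pi> j) = j" "\<And>j. inv \<pi> (\<pi> j) = j" using pi by (auto simp: permutes_inverses)
  have invk: "\<And>j. j \<in> {1..k} \<Longrightarrow> inv \<pi> j \<in> {1..k}" using permutes_in_image[OF permutes_inv[OF pi]] by blast
  have ic: "ic \<in> {1..k}" "\<pi> ic = c" using invk[OF c] piinv unfolding ic_def by auto
  define P where "P = (\<lambda>i. i \<in> {1..k} \<and> x w (\<pi> i) < \<rho>)"
  have Pic: "P ic" using ic xc P_def by auto
  have bnd: "\<And>y. P y \<Longrightarrow> y \<le> k" using P_def by auto
  define G where "G = (GREATEST i. P i)"
  have PG: "P G" unfolding G_def by (rule GreatestI_nat[of P ic k]) (use Pic bnd in auto)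
  have leG: "\<And>i. P i \<Longrightarrow> i \<le> G" unfolding G_def by (rule Greatest_le_nat[of P _ k]) (use bnd in auto)
  have ex: "\<exists>i\<in>{1..k}. x w i < \<rho>" using c xc by blast
  have Y: "GenColorRound k x dflt \<rho> \<pi> w = \<pi> G"
    unfolding GenColorRound_def G_def P_def using ex by simp
  show ?thesis
  proof
    assume "GenColorRound k x dflt \<rho> \<pi> w = c"
    then have "\<pi> G = c" using Y by simp
    then have G: "G = ic" unfolding ic_def using piinv(2)[of G] by simp
    show "\<forall>j\<in>{1..k}. j \<noteq> c \<and> x w j < \<rho> \<longrightarrow> inv \<pi> j < inv \<pi> c"
    proof (intro ballI impI)
      fix j assume j: "j \<in> {1..k}" "j \<noteq> c \<and> x w j < \<rho>"
      have "P (inv \<pi> j)" using j invk piinv P_def by auto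
      then have "inv \<pi> j \<le> ic" using leG G by auto
      moreover have "inv \<pi> j \<noteq> ic"
      proof
        assume "inv \<pi> j = ic"
        then have "\<pi> (inv \<pi> j) = c" using ic(2) by simp
        then show False using piinv(1)[of j] j by simp
      qed
      ultimately show "inv \<pi> j < inv \<pi> c" using ic_def by simp
    qed
  next
    assume H: "\<forall>j\<in>{1..k}. j \<noteq> c \<and> x w j < \<rho> \<longrightarrow> inv \<pi> j < inv \<pi> c"
    have "G \<in> {1..k}" using PG P_def by simp
    then have "\<pi> G \<in> {1..k}" using permutes_in_image[OF pi] by blast
    moreover have "x w (\<pi> G) < \<rho>" using PG P_def by simp
    ultimately have "\<pi> G \<noteq> c \<Longrightarrow> G < ic"
    proof -
      assume a: "\<pi> G \<in> {1..k}" "x w (\<pi> G) < \<rho>" "\<pi> G \<noteq> c"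
      then have "inv \<pi> (\<pi> G) < inv \<pi> c" using H by blast
      then show "G < ic" using piinv(2)[of G] ic_def by simp
    qed
    moreover have "ic \<le> G" using leG Pic by simp
    ultimately have "\<pi> G = c" by linarith
    then show "GenColorRound k x dflt \<rho> \<pi> w = c" using Y by simp
  qed
qed

lemma card_inv_perm:
  "card {\<pi>. \<pi> permutes A \<and> Q (inv \<pi>)} = card {\<sigma>. \<sigma> permutes A \<and> Q \<sigma>}"
proof -
  have "{\<sigma>. \<sigma> permutes A \<and> Q \<sigma>} = inv ` {\<pi>. \<pi> permutes A \<and> Q (inv \<pi>)}"
  proof
    show "{\<sigma>. \<sigma> permutes A \<and> Q \<sigma>} \<subseteq> inv ` {\<pi>. \<pi> permutes A \<and> Q (inv \<pi>)}"
    proof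
      fix \<sigma> assume "\<sigma> \<in> {\<sigma>. \<sigma> permutes A \<and> Q \<sigma>}"
      then have "inv \<sigma> permutes A" "Q (inv (inv \<sigma>))" "\<sigma> = inv (inv \<sigma>)"
        by (auto simp: permutes_inv permutes_inv_inv)
      then show "\<sigma> \<in> inv ` {\<pi>. \<pi> permutes A \<and> Q (inv \<pi>)}" by blast
    qed
  qed (auto simp: permutes_inv)
  moreover have "inj_on inv {\<pi>. \<pi> permutes A \<and> Q (inv \<pi>)}"
    by (rule inj_onI) (metis (mono_tags) mem_Collect_eq permutes_inv_inv)
  ultimately show ?thesis by (simp add: card_image)
qed

lemma count_last:
  assumes S: "S \<subseteq> {1..n}" and c: "c \<in> S"
  shows "card {\<sigma>. \<sigma> permutes {1..n} \<and> (\<forall>s\<in>S-{c}. \<sigma> s < \<sigma> c)} * card S = fact n"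
proof -
  define P where "P t = {\<sigma>. \<sigma> permutes {1..n::nat} \<and> (\<forall>s\<in>S-{t}. \<sigma> s < \<sigma> t)}" for t
  have finS: "finite S" using S finite_subset by blast
  have finP: "finite (P t)" for t
    unfolding P_def by (rule finite_subset[OF _ finite_permutations[of "{1..n::nat}"]]) auto
  have le: "card (P t) \<le> card (P t')" if t: "t \<in> S" "t' \<in> S" for t t'
  proof -
    define \<tau> where "\<tau> = Transposition.transpose t t'"
    have tt: "\<tau> (\<tau> y) = y" for y unfolding \<tau>_def by simp
    have "inj_on (\<lambda>\<sigma>. \<sigma> \<circ> \<tau>) (P t)"
    proof (rule inj_onI)
      fix \<sigma> \<sigma>' assume "\<sigma> \<circ> \<tau> = \<sigma>' \<circ> \<tau>"
      then have "\<sigma> (\<tau> (\<tau> y)) = \<sigma>' (\<tau> (\<tau> y))" for y by (metis comp_apply)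
      then show "\<sigma> = \<sigma>'" using tt by (simp add: fun_eq_iff)
    qed
    moreover have "(\<lambda>\<sigma>. \<sigma> \<circ> \<tau>) ` P t \<subseteq> P t'"
    proof
      fix \<sigma>2 assume "\<sigma>2 \<in> (\<lambda>\<sigma>. \<sigma> \<circ> \<tau>) ` P t"
      then obtain \<sigma> where \<sigma>: "\<sigma> \<in> P t" "\<sigma>2 = \<sigma> \<circ> \<tau>" by blast
      have perm: "\<tau> permutes {1..n}" unfolding \<tau>_def using t S by (intro permutes_swap_id) auto
      have "\<sigma>2 permutes {1..n}" using \<sigma> permutes_compose[OF perm] unfolding P_def by auto
      moreover have "\<forall>s\<in>S-{t'}. \<sigma>2 s < \<sigma>2 t'"
      proof
        fix s assume s: "s \<in> S - {t'}"
        have "\<tau> s \<in> S - {t}" using s t unfolding \<tau>_def by (auto simp: Transposition.transpose_def)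
        moreover have "\<tau> t' = t" unfolding \<tau>_def by simp
        ultimately show "\<sigma>2 s < \<sigma>2 t'" using \<sigma> unfolding P_def by auto
      qed
      ultimately show "\<sigma>2 \<in> P t'" unfolding P_def by simp
    qed
    ultimately show ?thesis by (rule card_inj_on_le[OF _ _ finP])
  qed
  have cover: "{\<sigma>. \<sigma> permutes {1..n}} = (\<Union>t\<in>S. P t)"
  proof
    show "{\<sigma>. \<sigma> permutes {1..n}} \<subseteq> (\<Union>t\<in>S. P t)"
    proof
      fix \<sigma> assume \<sigma>: "\<sigma> \<in> {\<sigma>. \<sigma> permutes {1..n}}"
      have ne: "\<sigma> ` S \<noteq> {}" using c by auto
      have "Max (\<sigma> ` S) \<in> \<sigma> ` S" using Max_in[OF _ ne] finS by simp
      then obtain t where t: "t \<in> S" "\<sigma> t = Max (\<sigma> ` S)" by auto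
      have inj: "inj \<sigma>" using \<sigma> permutes_inj by auto
      have "\<forall>s\<in>S-{t}. \<sigma> s < \<sigma> t"
      proof
        fix s assume s: "s \<in> S - {t}"
        have "\<sigma> s \<le> \<sigma> t" using t s finS by simp
        moreover have "\<sigma> s \<noteq> \<sigma> t" using inj s by (auto dest: injD)
        ultimately show "\<sigma> s < \<sigma> t" by simp
      qed
      then have "\<sigma> \<in> P t" using \<sigma> unfolding P_def by simp
      then show "\<sigma> \<in> (\<Union>t\<in>S. P t)" using t by blast
    qed
  qed (unfold P_def, blast)
  have "fact n = card {\<sigma>. \<sigma> permutes {1..n}}" by (simp add: card_permutations)
  also have "\<dots> = (\<Sum>t\<in>S. card (P t))"
    unfolding cover
  proof (rule card_UN_disjoint[OF finS])
    show "\<forall>i\<in>S. finite (P i)" using finP by simp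
    show "\<forall>i\<in>S. \<forall>j\<in>S. i \<noteq> j \<longrightarrow> P i \<inter> P j = {}"
    proof (intro ballI impI)
      fix i j assume ij: "i\<in>S" "j\<in>S" "i\<noteq>j"
      show "P i \<inter> P j = {}"
      proof (rule ccontr)
        assume "P i \<inter> P j \<noteq> {}"
        then obtain \<sigma> where "\<sigma> \<in> P i" "\<sigma> \<in> P j" by blast
        then have "\<sigma> j < \<sigma> i" "\<sigma> i < \<sigma> j" using ij unfolding P_def by auto
        then show False by simp
      qed
    qed
  qed
  also have "\<dots> = (\<Sum>t\<in>S. card (P c))"
  proof (rule sum.cong[OF refl])
    fix t assume "t \<in> S"
    then show "card (P t) = card (P c)" using le[of t c] le[of c t] c by simp
  qed
  also have "\<dots> = card (P c) * card S" by simp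
  finally show ?thesis unfolding P_def by simp
qed


lemma card_split: "finite A \<Longrightarrow> card {a\<in>A. P a} + card {a\<in>A. \<not> P a} = card A"
proof -
  assume fA: "finite A"
  have "card ({a\<in>A. P a} \<union> {a\<in>A. \<not> P a}) = card {a\<in>A. P a} + card {a\<in>A. \<not> P a}"
    by (rule card_Un_disjoint) (use fA in auto)
  moreover have "{a\<in>A. P a} \<union> {a\<in>A. \<not> P a} = A" by auto
  ultimately show ?thesis by simp
qed

lemma alg_aux:
  fixes a b n F :: real
  assumes h1: "b * (n + 1) = F" and h2: "a = F - b" and h3: "n + 1 > 0"
  shows "a = F * (n / (n + 1))"
proof -
  have "b = F / (n + 1)" using h1 h3 by (simp add: eq_divide_eq)
  then have "a = F - F / (n + 1)" using h2 by simp
  also have "\<dots> = F * (n / (n + 1))" using h3 by (simp add: field_simps)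
  finally show ?thesis .
qed

theorem lemma4:
  fixes V :: "'v set" and E :: "'v set set" and k :: nat and ell :: "'v set \<Rightarrow> nat"
    and x :: "'v \<Rightarrow> nat \<Rightarrow> real" and xE :: "'v set \<Rightarrow> real"
    and u v :: 'v and dflt :: "'v \<Rightarrow> nat" and p q :: nat
  assumes "edge_colored_graph V E k ell"
    and "MinECC_LP_feasible V E k ell x xE"
    and "{u, v} \<in> E"
    and "xE {u, v} = max (x u (ell {u, v})) (x v (ell {u, v}))"
    and "\<forall>w. dflt w \<in> {1..k}"
    and "1/8 < xE {u, v}" and "xE {u, v} < 1/2"
    and "1 \<le> p" and "p \<le> q"
    and "color_thresholds k x {u, v} (ell {u, v}) (p - 1) \<le> 1/2"
    and "1/2 \<le> color_thresholds k x {u, v} (ell {u, v}) p"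
    and "color_thresholds k x {u, v} (ell {u, v}) p \<le> color_thresholds k x {u, v} (ell {u, v}) q"
    and "color_thresholds k x {u, v} (ell {u, v}) q \<le> 7/8"
    and "7/8 \<le> color_thresholds k x {u, v} (ell {u, v}) (q + 1)"
  shows "p = 1 \<and> q \<le> 6 \<and>
    GCR_prob k (1/2) (7/8) (\<lambda>\<rho> \<pi>. mistake (GenColorRound k x dflt \<rho> \<pi>) ell {u, v})
      \<le> 8/3 * A_LP q * xE {u, v}"
proof -
  define e where "e = {u,v}"
  define c where "c = ell e"
  define xe where "xe = xE e"
  define z where "z i = color_thresholds k x e c i" for i
  have xe1: "1/8 < xe" and xe2: "xe < 1/2" using assms(6,7) unfolding xe_def e_def by auto
  have z1: "1 \<le> p" "p \<le> q" "z (p-1) \<le> 1/2" "1/2 \<le> z p" "z p \<le> z q" "z q \<le> 7/8" "7/8 \<le> z (q+1)"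
    using assms(8-14)[folded e_def, folded c_def, folded z_def] by simp_all
  have eE: "e \<in> E" using assms(3) e_def by simp
  have eV: "e \<subseteq> V" and ce: "card e = 2" and ck: "c \<in> {1..k}"
    using assms(1) eE unfolding edge_colored_graph_def c_def by auto
  have uv: "u \<noteq> v" using ce e_def by auto
  have uV: "u \<in> V" and vV: "v \<in> V" using eV e_def by auto
  have k1: "1 \<le> k" using ck by simp
  have sumk: "\<And>w. w \<in> V \<Longrightarrow> (\<Sum>i=1..k. x w i) = real k - 1"
    and xcle: "\<And>w. w \<in> e \<Longrightarrow> x w c \<le> xe"
    and xb: "\<And>w i. w \<in> V \<Longrightarrow> i \<in> {1..k} \<Longrightarrow> 0 \<le> x w i \<and> x w i \<le> 1"
    using assms(2) eE unfolding MinECC_LP_feasible_def c_def xe_def by auto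
  define J where "J = {1..k} - {c}"
  have finJ: "finite J" unfolding J_def by simp
  have cardJ: "card J = k - 1" unfolding J_def using ck by simp
  define d where "d w j = 1 - x w j" for w j
  have dsum: "(\<Sum>j\<in>J. d w j) = x w c" if w: "w \<in> V" for w
  proof -
    have "(\<Sum>i=1..k. x w i) = x w c + (\<Sum>j\<in>J. x w j)"
      unfolding J_def using ck by (simp add: sum.remove)
    then have "(\<Sum>j\<in>J. x w j) = real k - 1 - x w c" using sumk[OF w] by simp
    moreover have "real (card J) = real k - 1" using cardJ k1 by simp
    ultimately show ?thesis unfolding d_def by (simp add: sum_subtractf)
  qed
  have dnn: "0 \<le> d w j" if "w \<in> V" "j \<in> J" for w j
    using xb that unfolding d_def J_def by auto
  have dsub: "(\<Sum>j\<in>A. d w j) \<le> xe" if "w \<in> e" "A \<subseteq> J" for w A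
  proof -
    have "(\<Sum>j\<in>A. d w j) \<le> (\<Sum>j\<in>J. d w j)"
      using that dnn eV by (intro sum_mono2[OF finJ]) auto
    also have "\<dots> = x w c" using dsum that eV by auto
    also have "\<dots> \<le> xe" using xcle that by simp
    finally show ?thesis .
  qed
  define m where "m j = min (x u j) (x v j)" for j
  define s where "s j = (if x u j \<le> x v j then u else v)" for j
  have se: "s j \<in> e" for j unfolding s_def e_def by auto
  have ms_s: "1 - m j = d (s j) j" for j unfolding m_def s_def d_def by auto
  have mlow: "1 - m j \<le> xe" if "j \<in> J" for j
    using dsub[OF se, of "{j}" j] that ms_s by simp
  have mle1: "m j \<le> 1" if "j \<in> J" for j using xb[OF uV, of j] that unfolding m_def J_def by auto
  define L where "L = filter (\<lambda>j. j \<noteq> c) [1..<k+1]"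
  define K where "K = k - 1"
  have setL: "set L = J" unfolding L_def J_def by auto
  have distL: "distinct L" unfolding L_def by simp
  have lenL: "length L = K" using distinct_card[OF distL] setL cardJ K_def by simp
  have Min_eq: "Min ((\<lambda>w. x w j) ` e) = m j" for j unfolding e_def m_def by simp
  define ms where "ms = sort (map m L)"
  have lenms: "length ms = K" unfolding ms_def using lenL by simp
  have sortedms: "sorted ms" unfolding ms_def by simp
  have ct: "z i = (if i = 0 then 0 else if i \<le> K then ms ! (i-1) else 1)" for i
    unfolding z_def color_thresholds_def Let_def Min_eq ms_def L_def K_def by (rule refl)
  have zdef1: "z i = ms ! (i-1)" if "1 \<le> i" "i \<le> K" for i
    using that ct by simp
  have zdef2: "z i = 1" if "K < i" for i
    using that ct by simp
  have "mset ms = mset (map m L)" unfolding ms_def by simp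
  then obtain pp where pp: "pp permutes {..<length (map m L)}" "permute_list pp (map m L) = ms"
    by (rule mset_eq_permutation)
  have ppK: "pp permutes {..<K}" using pp lenL by simp
  define jj where "jj i = L ! (pp (i - 1))" for i
  have ppin: "pp i < K" if "i < K" for i using permutes_in_image[OF ppK] that by auto
  have jjJ: "jj i \<in> J" if "i \<in> {1..K}" for i
  proof -
    have "pp (i-1) < length L" using that ppin[of "i-1"] lenL by auto
    then have "L ! (pp (i-1)) \<in> set L" by (rule nth_mem)
    then show ?thesis using setL unfolding jj_def by simp
  qed
  have zjj: "z i = m (jj i)" if "i \<in> {1..K}" for i
  proof -
    have "z i = ms ! (i-1)" using zdef1 that by auto
    also have "\<dots> = map m L ! (pp (i-1))" using pp(2)[symmetric] permute_list_nth[OF pp(1)] that lenL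
      by auto
    also have "\<dots> = m (jj i)" unfolding jj_def using ppin[of "i-1"] that lenL by auto
    finally show ?thesis .
  qed
  have jjinj: "inj_on jj {1..K}"
  proof (rule inj_onI)
    fix i i' assume ii: "i \<in> {1..K}" "i' \<in> {1..K}" "jj i = jj i'"
    then have "pp (i-1) = pp (i'-1)" unfolding jj_def using ppin[of "i-1"] ppin[of "i'-1"] lenL distL
      by (auto simp: nth_eq_iff_index_eq)
    then have "i - 1 = i' - 1" using permutes_inj[OF ppK] by (auto dest: injD)
    then show "i = i'" using ii by auto
  qed
  have jjimg: "jj ` {1..K} = J"
  proof (rule card_subset_eq[OF finJ])
    show "jj ` {1..K} \<subseteq> J" using jjJ by auto
    show "card (jj ` {1..K}) = card J" using card_image[OF jjinj] cardJ K_def by simp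
  qed
  have zmono: "z i \<le> z i'" if "1 \<le> i" "i \<le> i'" for i i'
  proof (cases "i' \<le> K")
    case True
    then show ?thesis using zdef1 that sorted_nth_mono[OF sortedms, of "i-1" "i'-1"] lenms by auto
  next
    case False
    then have "z i' = 1" using zdef2 by simp
    moreover have "z i \<le> 1"
    proof (cases "i \<le> K")
      case True then show ?thesis using zjj[of i] mle1 jjJ that by auto
    qed (use zdef2 in auto)
    ultimately show ?thesis by simp
  qed
  have zlow: "1 - z i \<le> xe" if "1 \<le> i" for i
  proof (cases "i \<le> K")
    case True then show ?thesis using zjj[of i] mlow jjJ that by auto
  qed (use zdef2 xe1 in auto)
  have zle1: "z i \<le> 1" if "1 \<le> i" for i
  proof (cases "i \<le> K")
    case True then show ?thesis using zjj[of i] mle1 jjJ that by auto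
  qed (use zdef2 in auto)
  have pigeon: "\<exists>I. I \<subseteq> {1..n} \<and> n \<le> 2 * card I \<and> (\<Sum>i\<in>I. 1 - z i) \<le> xe" if n: "n \<le> K" for n
  proof -
    define I where "I w = {i\<in>{1..n}. s (jj i) = w}" for w
    have sumI: "(\<Sum>i\<in>I w. 1 - z i) \<le> xe" if w: "w \<in> e" for w
    proof -
      have sub: "I w \<subseteq> {1..K}" unfolding I_def using n by auto
      have "(\<Sum>i\<in>I w. 1 - z i) = (\<Sum>i\<in>I w. d w (jj i))"
        using sub zjj ms_s unfolding I_def by (intro sum.cong) auto
      also have "\<dots> = (\<Sum>j\<in>jj ` I w. d w j)"
        by (subst sum.reindex[OF inj_on_subset[OF jjinj sub]]) (simp add: comp_def)
      also have "\<dots> \<le> xe" using dsub[OF w] jjimg sub by blast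
      finally show ?thesis .
    qed
    have cu: "{1..n} = I u \<union> I v" unfolding I_def using se e_def by auto
    have "n = card (I u \<union> I v)" unfolding cu[symmetric] by simp
    then have "n \<le> card (I u) + card (I v)" using card_Un_le[of "I u" "I v"] by linarith
    then have "n \<le> 2 * card (I u) \<or> n \<le> 2 * card (I v)" by linarith
    moreover have "I u \<subseteq> {1..n}" "I v \<subseteq> {1..n}" unfolding I_def by auto
    ultimately show ?thesis using sumI e_def by blast
  qed
  have p1: "p = 1"
  proof (rule ccontr)
    assume "p \<noteq> 1"
    then have "1 \<le> p - 1" using z1 by simp
    then show False using zlow[of "p-1"] z1 xe2 by simp
  qed
  have qK: "q \<le> K"
  proof (rule ccontr)
    assume "\<not> q \<le> K" then show False using zdef2[of q] z1 by simp
  qed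
  have q6: "q \<le> 6"
  proof (rule ccontr)
    assume "\<not> q \<le> 6"
    then obtain I where I: "I \<subseteq> {1..7}" "7 \<le> 2 * card I" "(\<Sum>i\<in>I. 1 - z i) \<le> xe"
      using pigeon[of 7] qK by auto
    have "(\<Sum>i\<in>I. (1/8::real)) \<le> (\<Sum>i\<in>I. 1 - z i)"
    proof (rule sum_mono)
      fix i assume "i \<in> I"
      then have "z i \<le> z q" using I \<open>\<not> q \<le> 6\<close> by (intro zmono) auto
      then show "1/8 \<le> 1 - z i" using z1 by simp
    qed
    moreover have "real (card I) \<ge> 4" using I by simp
    ultimately show False using I xe2 by simp
  qed
  have xepos: "0 < xe" using xe1 by simp
  have c23: "2 - z 2 - z 3 \<le> xe"
  proof (cases "3 \<le> K")
    case False
    then have "z 3 = 1" using zdef2 by simp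
    then show ?thesis using zlow[of 2] by simp
  next
    case True
    obtain I where I: "I \<subseteq> {1..3}" "3 \<le> 2 * card I" "(\<Sum>i\<in>I. 1 - z i) \<le> xe"
      using pigeon[OF True] by auto
    define C where "C = {1..3} - I"
    have cI: "card I \<le> 3" using card_mono[OF _ I(1)] by simp
    have cardC: "card C \<le> 1" unfolding C_def using card_Diff_subset[OF finite_subset[OF I(1)] I(1)] I(2) cI
      by simp
    have "(\<Sum>i\<in>C. 1 - z i) \<le> (\<Sum>i\<in>C. 1 - z 1)"
      by (rule sum_mono) (use zmono C_def in auto)
    also have "\<dots> = real (card C) * (1 - z 1)" by simp
    also have "\<dots> \<le> 1 - z 1"
      using cardC zle1[of 1] by (intro mult_left_le_one_le) auto
    finally have sumC: "(\<Sum>i\<in>C. 1 - z i) \<le> 1 - z 1" .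
    have tot: "(\<Sum>i\<in>{1..3}. 1 - z i) = (\<Sum>i\<in>C. 1 - z i) + (\<Sum>i\<in>I. 1 - z i)"
      unfolding C_def by (rule sum.subset_diff[OF I(1)]) simp
    have "{1..3::nat} = {1,2,3}" by auto
    then have "(\<Sum>i\<in>{1..3}. 1 - z i) = (1 - z 1) + (1 - z 2) + (1 - z 3)" by simp
    then show ?thesis using tot sumC I(3) by linarith
  qed
  have c5: "3 * (1 - z 5) \<le> xe"
  proof (cases "5 \<le> K")
    case False
    then have "z 5 = 1" using zdef2 by simp
    then show ?thesis using xepos by simp
  next
    case True
    obtain I where I: "I \<subseteq> {1..5}" "5 \<le> 2 * card I" "(\<Sum>i\<in>I. 1 - z i) \<le> xe"
      using pigeon[OF True] by auto
    have n5: "0 \<le> 1 - z 5" using zle1[of 5] by simp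
    have "3 * (1 - z 5) \<le> real (card I) * (1 - z 5)"
      using I(2) n5 by (intro mult_right_mono) auto
    also have "\<dots> = (\<Sum>i\<in>I. 1 - z 5)" by simp
    also have "\<dots> \<le> (\<Sum>i\<in>I. 1 - z i)"
      by (rule sum_mono) (use zmono I(1) in auto)
    finally show ?thesis using I(3) by linarith
  qed
  define \<omega> where "\<omega> i = z i / xe" for i
  define \<kappa> where "\<kappa> = 1 / xe"
  have feas: "lemma4_LP_feasible q \<omega> \<kappa>"
    unfolding lemma4_LP_feasible_def
  proof (intro conjI ballI)
    fix i :: nat assume "i \<in> {1..5}"
    then have "z i \<le> z (i+1)" by (intro zmono) auto
    then show "\<omega> i \<le> \<omega> (i + 1)" unfolding \<omega>_def using xepos by (simp add: divide_right_mono)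
  next
    have "\<kappa> - \<omega> 1 = (1 - z 1) / xe" unfolding \<kappa>_def \<omega>_def by (simp add: diff_divide_distrib)
    also have "\<dots> \<le> 1" using zlow[of 1] xepos by (simp add: pos_divide_le_eq)
    finally show "\<kappa> - \<omega> 1 \<le> 1" .
  next
    have "2 * \<kappa> - \<omega> 2 - \<omega> 3 = (2 - z 2 - z 3) / xe" unfolding \<kappa>_def \<omega>_def by (simp add: diff_divide_distrib)
    also have "\<dots> \<le> 1" using c23 xepos by (simp add: pos_divide_le_eq)
    finally show "2 * \<kappa> - \<omega> 2 - \<omega> 3 \<le> 1" .
  next
    have "3 * \<kappa> - 3 * \<omega> 5 = (3 * (1 - z 5)) / xe" unfolding \<kappa>_def \<omega>_def by (simp add: diff_divide_distrib right_diff_distrib)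
    also have "\<dots> \<le> 1" using c5 xepos by (simp add: pos_divide_le_eq)
    finally show "3 * \<kappa> - 3 * \<omega> 5 \<le> 1" .
  next
    show "2 \<le> \<kappa>" unfolding \<kappa>_def using xe2 xepos by (simp add: le_divide_eq)
  next
    have "z q / xe \<le> (7/8) / xe" using z1(6) xepos by (intro divide_right_mono) auto
    then show "\<omega> q \<le> 7/8 * \<kappa>" unfolding \<kappa>_def \<omega>_def by simp
  qed
  have chain: "\<omega>' 1 \<le> \<omega>' j" if "\<forall>i\<in>{1..5}. \<omega>' i \<le> \<omega>' (i + 1)" "1 \<le> j" "j \<le> 6" for \<omega>' :: "nat \<Rightarrow> real" and j
    using that(2,3)
  proof (induction j)
    case 0 then show ?case by simp
  next
    case (Suc j)
    show ?case
    proof (cases "j = 0")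
      case True then show ?thesis by simp
    next
      case False
      then have "\<omega>' 1 \<le> \<omega>' j" using Suc by simp
      moreover have "\<omega>' j \<le> \<omega>' (j+1)" using that(1) False Suc.prems by auto
      ultimately show ?thesis by simp
    qed
  qed
  have bdd: "bdd_above {lemma4_LP_obj q \<omega> \<kappa> | \<omega> \<kappa>. lemma4_LP_feasible q \<omega> \<kappa>}"
  proof (rule bdd_aboveI[of _ 1])
    fix y assume "y \<in> {lemma4_LP_obj q \<omega> \<kappa> | \<omega> \<kappa>. lemma4_LP_feasible q \<omega> \<kappa>}"
    then obtain \<omega>' \<kappa>' where y: "y = lemma4_LP_obj q \<omega>' \<kappa>'" and f: "lemma4_LP_feasible q \<omega>' \<kappa>'" by blast
    have f1: "\<forall>i\<in>{1..5}. \<omega>' i \<le> \<omega>' (i + 1)" "\<kappa>' - \<omega>' 1 \<le> 1" "\<kappa>' \<ge> 2"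
      using f unfolding lemma4_LP_feasible_def by auto
    have "(\<Sum>j=1..q. (\<kappa>' - 1) * (1 / (real j * (real j + 1)))) \<le> (\<Sum>j=1..q. \<omega>' j / (real j * (real j + 1)))"
    proof (rule sum_mono)
      fix j assume j: "j \<in> {1..q}"
      have "\<kappa>' - 1 \<le> \<omega>' j" using chain[OF f1(1), of j] j q6 f1(2) by auto
      then show "(\<kappa>' - 1) * (1 / (real j * (real j + 1))) \<le> \<omega>' j / (real j * (real j + 1))"
        by (simp add: divide_right_mono)
    qed
    also have "(\<Sum>j=1..q. (\<kappa>' - 1) * (1 / (real j * (real j + 1)))) = (\<kappa>' - 1) * (real q / (real q + 1))"
      by (simp only: sum_distrib_left[symmetric] telescope)
    finally have le: "(\<kappa>' - 1) * (real q / (real q + 1)) \<le> (\<Sum>j=1..q. \<omega>' j / (real j * (real j + 1)))" .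
    have "y \<le> real q / (real q + 1) * (7/8) * \<kappa>' - (\<kappa>' - 1) * (real q / (real q + 1))"
      using y le unfolding lemma4_LP_obj_def by simp
    also have "\<dots> = real q / (real q + 1) * (1 - \<kappa>' / 8)"
    proof -
      have gen: "\<And>r::real. r * (7/8) * \<kappa>' - (\<kappa>' - 1) * r = r * (1 - \<kappa>'/8)" by (simp add: algebra_simps)
      show ?thesis by (rule gen)
    qed
    also have "\<dots> \<le> real q / (real q + 1) * 1"
      using f1(3) by (intro mult_left_mono) auto
    also have "\<dots> \<le> 1" by simp
    finally show "y \<le> 1" .
  qed
  have objle: "lemma4_LP_obj q \<omega> \<kappa> \<le> A_LP q"
    unfolding A_LP_def by (rule cSup_upper[OF _ bdd]) (use feas in blast)
  have objval: "xe * lemma4_LP_obj q \<omega> \<kappa> = (\<Sum>i=1..q. (7/8 - z i) / (real i * (real i + 1)))"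
  proof -
    have "(\<Sum>i=1..q. (7/8 - z i) / (real i * (real i + 1)))
        = 7/8 * (\<Sum>i=1..q. 1 / (real i * (real i + 1))) - (\<Sum>i=1..q. z i / (real i * (real i + 1)))"
      by (simp add: sum_subtractf sum_distrib_left diff_divide_distrib)
    also have "\<dots> = 7/8 * (real q / (real q + 1)) - (\<Sum>i=1..q. z i / (real i * (real i + 1)))"
      by (simp only: telescope)
    finally have r: "(\<Sum>i=1..q. (7/8 - z i) / (real i * (real i + 1))) = 7/8 * (real q / (real q + 1)) - (\<Sum>i=1..q. z i / (real i * (real i + 1)))" .
    have s: "xe * (\<Sum>j=1..q. \<omega> j / (real j * (real j + 1))) = (\<Sum>i=1..q. z i / (real i * (real i + 1)))"
      unfolding sum_distrib_left \<omega>_def using xepos by (intro sum.cong) auto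
    show ?thesis unfolding lemma4_LP_obj_def r right_diff_distrib s[symmetric]
      unfolding \<kappa>_def using xepos by (simp add: ac_simps)
  qed
  define Perms where "Perms = {\<pi>. \<pi> permutes {1..k::nat}}"
  have finPerms: "finite Perms" unfolding Perms_def by (rule finite_permutations) simp
  have cardPerms: "card Perms = fact k" unfolding Perms_def by (rule card_permutations) auto
  have ellc: "ell {u, v} = c" unfolding c_def e_def ..
  have char: "mistake (GenColorRound k x dflt \<rho> \<pi>) ell {u, v} \<longleftrightarrow> (\<exists>j\<in>J. m j < \<rho> \<and> \<not> inv \<pi> j < inv \<pi> c)"
    if pi: "\<pi> \<in> Perms" and rho: "1/2 < \<rho>" for \<rho> \<pi>
  proof -
    have pp: "\<pi> permutes {1..k}" using pi Perms_def by simp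
    have xu: "x u c < \<rho>" using xcle[of u] e_def xe2 rho by auto
    have xv: "x v c < \<rho>" using xcle[of v] e_def xe2 rho by auto
    have "mistake (GenColorRound k x dflt \<rho> \<pi>) ell {u, v} \<longleftrightarrow>
      \<not> (GenColorRound k x dflt \<rho> \<pi> u = c \<and> GenColorRound k x dflt \<rho> \<pi> v = c)"
      unfolding mistake_def ellc by auto
    also have "\<dots> \<longleftrightarrow> \<not> ((\<forall>j\<in>{1..k}. j \<noteq> c \<and> x u j < \<rho> \<longrightarrow> inv \<pi> j < inv \<pi> c) \<and>
                         (\<forall>j\<in>{1..k}. j \<noteq> c \<and> x v j < \<rho> \<longrightarrow> inv \<pi> j < inv \<pi> c))"
      using GCR_char[where w=u and x=x and \<rho>=\<rho>, OF pp ck xu, of dflt]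
        GCR_char[where w=v and x=x and \<rho>=\<rho>, OF pp ck xv, of dflt] by simp
    also have "\<dots> \<longleftrightarrow> (\<exists>j\<in>J. m j < \<rho> \<and> \<not> inv \<pi> j < inv \<pi> c)"
      unfolding J_def m_def min_less_iff_disj by blast
    finally show ?thesis .
  qed
  define A where "A \<pi> = {\<rho> \<in> {1/2<..<7/8::real}. mistake (GenColorRound k x dflt \<rho> \<pi>) ell {u, v}}" for \<pi>
  have Aeq: "A \<pi> = {1/2<..<7/8} \<inter> (\<Union>j\<in>{j\<in>J. \<not> inv \<pi> j < inv \<pi> c}. {m j<..})" if "\<pi> \<in> Perms" for \<pi>
    unfolding A_def using char[OF that] by auto
  have Asets: "A \<pi> \<in> sets lborel" if "\<pi> \<in> Perms" for \<pi>
    unfolding Aeq[OF that] using finJ by (intro sets.Int sets.finite_UN) auto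
  have Afin: "emeasure lborel (A \<pi>) < \<infinity>" if "\<pi> \<in> Perms" for \<pi>
  proof -
    have "emeasure lborel (A \<pi>) \<le> emeasure lborel {1/2<..<7/8::real}"
      by (rule emeasure_mono) (auto simp: A_def)
    also have "\<dots> < \<infinity>" by simp
    finally show ?thesis .
  qed
  define B where "B i = {z i<..<7/8::real}" for i
  have zge: "1/2 \<le> z i" if "i \<in> {1..q}" for i using zmono[of 1 i] that z1 p1 by auto
  have zle: "z i \<le> 7/8" if "i \<in> {1..q}" for i using zmono[of i q] that z1 by auto
  have key: "(\<Sum>\<pi>\<in>Perms. indicator (A \<pi>) \<rho>) = fact k * (\<Sum>i=1..q. 1 / (real i * (real i + 1)) * indicator (B i) \<rho>)"
    for \<rho> :: real
  proof (cases "\<rho> \<in> {1/2<..<7/8}")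
    case False
    have "indicator (A \<pi>) \<rho> = (0::real)" for \<pi> using False unfolding A_def by auto
    moreover have "indicator (B i) \<rho> = (0::real)" if "i \<in> {1..q}" for i
      using False zge[OF that] unfolding B_def by auto
    ultimately show ?thesis by simp
  next
    case True
    then have r1: "1/2 < \<rho>" and r2: "\<rho> < 7/8" by auto
    have "(\<Sum>\<pi>\<in>Perms. indicator (A \<pi>) \<rho>) = (\<Sum>\<pi>\<in>Perms. if mistake (GenColorRound k x dflt \<rho> \<pi>) ell {u, v} then 1 else (0::real))"
      using True unfolding A_def by (intro sum.cong) auto
    also have "\<dots> = real (card {\<pi>\<in>Perms. mistake (GenColorRound k x dflt \<rho> \<pi>) ell {u, v}})"
      by (simp add: sum.inter_filter[symmetric] finPerms)
    finally have L1: "(\<Sum>\<pi>\<in>Perms. indicator (A \<pi>) \<rho>) = real (card {\<pi>\<in>Perms. mistake (GenColorRound k x dflt \<rho> \<pi>) ell {u, v}})" .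
    define T where "T = {j\<in>J. m j < \<rho>}"
    define S where "S = insert c T"
    have cT: "c \<notin> T" unfolding T_def J_def by simp
    have finT: "finite T" unfolding T_def using finJ by simp
    have ST: "S - {c} = T" unfolding S_def using cT by auto
    have Ssub: "S \<subseteq> {1..k}" unfolding S_def T_def J_def using ck by auto
    have noM: "{\<pi>\<in>Perms. \<not> mistake (GenColorRound k x dflt \<rho> \<pi>) ell {u, v}} =
        {\<pi>. \<pi> permutes {1..k} \<and> (\<lambda>\<sigma>. \<forall>s\<in>S-{c}. \<sigma> s < \<sigma> c) (inv \<pi>)}"
      using char[OF _ r1] unfolding ST T_def Perms_def by auto
    have cnt: "card {\<pi>\<in>Perms. \<not> mistake (GenColorRound k x dflt \<rho> \<pi>) ell {u, v}} * card S = fact k"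
    proof -
      have ci: "card {\<pi>. \<pi> permutes {1..k} \<and> (\<lambda>\<sigma>. \<forall>s\<in>S-{c}. \<sigma> s < \<sigma> c) (inv \<pi>)}
          = card {\<sigma>. \<sigma> permutes {1..k} \<and> (\<forall>s\<in>S-{c}. \<sigma> s < \<sigma> c)}"
        by (rule card_inv_perm)
      show ?thesis unfolding noM ci using count_last[OF Ssub, of c] S_def by simp
    qed
    have cS: "card S = card T + 1" unfolding S_def using cT finT by simp
    have split: "card {\<pi>\<in>Perms. mistake (GenColorRound k x dflt \<rho> \<pi>) ell {u, v}}
       + card {\<pi>\<in>Perms. \<not> mistake (GenColorRound k x dflt \<rho> \<pi>) ell {u, v}} = card Perms"
      by (rule card_split[OF finPerms])
    define D where "D = {i\<in>{1..q}. z i < \<rho>}"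
    have DK: "{i\<in>{1..K}. z i < \<rho>} = D"
    proof -
      have "i \<le> q" if "i \<in> {1..K}" "z i < \<rho>" for i
      proof (rule ccontr)
        assume "\<not> i \<le> q"
        then have "z (q+1) \<le> z i" by (intro zmono) auto
        then show False using z1 that r2 by simp
      qed
      then show ?thesis unfolding D_def using qK by auto
    qed
    have TD: "T = jj ` D"
    proof -
      have "T = {j \<in> jj ` {1..K}. m j < \<rho>}" unfolding T_def jjimg ..
      also have "\<dots> = jj ` {i\<in>{1..K}. z i < \<rho>}" using zjj by auto
      finally show ?thesis unfolding DK .
    qed
    have DsubK: "D \<subseteq> {1..K}" unfolding D_def using qK by auto
    have cTD: "card T = card D" unfolding TD by (rule card_image[OF inj_on_subset[OF jjinj DsubK]])
    have Deq: "D = {1..card D}"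
    proof (rule downclosed)
      show "finite D" unfolding D_def by simp
      show "1 \<le> i" if "i \<in> D" for i using that D_def by simp
      show "i' \<in> D" if "i \<in> D" "1 \<le> i'" "i' \<le> i" for i i'
        using that zmono[of i' i] unfolding D_def by auto
    qed
    have "(\<Sum>i=1..q. 1 / (real i * (real i + 1)) * indicator (B i) \<rho>) = (\<Sum>i=1..q. if z i < \<rho> then 1 / (real i * (real i + 1)) else 0)"
      using r2 unfolding B_def by (intro sum.cong) auto
    also have "\<dots> = (\<Sum>i\<in>D. 1 / (real i * (real i + 1)))"
      unfolding D_def by (rule sum.inter_filter[symmetric]) simp
    also have "\<dots> = real (card D) / (real (card D) + 1)"
      using arg_cong[OF Deq, of "sum (\<lambda>i. 1 / (real i * (real i + 1)))"] telescope[of "card D"] by simp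
    finally have R1: "(\<Sum>i=1..q. 1 / (real i * (real i + 1)) * indicator (B i) \<rho>) = real (card D) / (real (card D) + 1)" .
    define N where "N = card D"
    have e1: "real (card {\<pi>\<in>Perms. \<not> mistake (GenColorRound k x dflt \<rho> \<pi>) ell {u, v}}) * (real N + 1) = fact k"
    proof -
      have "card {\<pi>\<in>Perms. \<not> mistake (GenColorRound k x dflt \<rho> \<pi>) ell {u, v}} * (N + 1) = fact k"
        using cnt cS cTD N_def by simp
      from arg_cong[OF this, of real] show ?thesis by (simp add: algebra_simps)
    qed
    have e2: "real (card {\<pi>\<in>Perms. mistake (GenColorRound k x dflt \<rho> \<pi>) ell {u, v}})
        = fact k - real (card {\<pi>\<in>Perms. \<not> mistake (GenColorRound k x dflt \<rho> \<pi>) ell {u, v}})"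
    proof -
      have "real (card {\<pi>\<in>Perms. mistake (GenColorRound k x dflt \<rho> \<pi>) ell {u, v}})
        + real (card {\<pi>\<in>Perms. \<not> mistake (GenColorRound k x dflt \<rho> \<pi>) ell {u, v}}) = fact k"
        using arg_cong[OF split, of real] cardPerms by simp
      then show ?thesis by linarith
    qed
    have "real N + 1 > 0" by simp
    then have "real (card {\<pi>\<in>Perms. mistake (GenColorRound k x dflt \<rho> \<pi>) ell {u, v}}) = fact k * (real N / (real N + 1))"
      using alg_aux[OF e1 e2] by simp
    then show ?thesis using L1 R1 N_def by simp
  qed
  have intA: "integrable lborel (indicator (A \<pi>) :: real \<Rightarrow> real)" if "\<pi> \<in> Perms" for \<pi>
    using Asets[OF that] Afin[OF that] by simp
  have intB: "integrable lborel (\<lambda>\<rho>. 1 / (real i * (real i + 1)) * (indicator (B i) \<rho> :: real))" if "i \<in> {1..q}" for i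
    using zle[OF that] unfolding B_def by (intro integrable_mult_right integrable_real_indicator) auto
  have "(\<Sum>\<pi>\<in>Perms. measure lborel (A \<pi>)) = (\<Sum>\<pi>\<in>Perms. integral\<^sup>L lborel (indicator (A \<pi>)))"
    by simp
  also have "\<dots> = integral\<^sup>L lborel (\<lambda>\<rho>. \<Sum>\<pi>\<in>Perms. indicator (A \<pi>) \<rho>)"
    using Bochner_Integration.integral_sum[where I=Perms and M=lborel and f="\<lambda>\<pi> \<rho>. indicator (A \<pi>) \<rho> :: real"] intA by simp
  also have "\<dots> = integral\<^sup>L lborel (\<lambda>\<rho>. fact k * (\<Sum>i=1..q. 1 / (real i * (real i + 1)) * indicator (B i) \<rho>))"
    unfolding key ..
  also have "\<dots> = fact k * (\<Sum>i=1..q. integral\<^sup>L lborel (\<lambda>\<rho>. 1 / (real i * (real i + 1)) * indicator (B i) \<rho>))"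
  proof -
    have isum: "integral\<^sup>L lborel (\<lambda>\<rho>. \<Sum>i=1..q. 1 / (real i * (real i + 1)) * indicator (B i) \<rho>)
      = (\<Sum>i=1..q. integral\<^sup>L lborel (\<lambda>\<rho>. 1 / (real i * (real i + 1)) * indicator (B i) \<rho>))"
      by (rule Bochner_Integration.integral_sum) (rule intB)
    show ?thesis by (simp only: integral_mult_right_zero isum)
  qed
  also have "\<dots> = fact k * (\<Sum>i=1..q. (7/8 - z i) / (real i * (real i + 1)))"
  proof -
    have "integral\<^sup>L lborel (\<lambda>\<rho>. 1 / (real i * (real i + 1)) * indicator (B i) \<rho>) = (7/8 - z i) / (real i * (real i + 1))"
      if "i \<in> {1..q}" for i
      using zle[OF that] unfolding B_def by simp
    then show ?thesis by simp
  qed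
  finally have meas: "(\<Sum>\<pi>\<in>Perms. measure lborel (A \<pi>)) = fact k * (\<Sum>i=1..q. (7/8 - z i) / (real i * (real i + 1)))" .
  have "GCR_prob k (1/2) (7/8) (\<lambda>\<rho> \<pi>. mistake (GenColorRound k x dflt \<rho> \<pi>) ell {u, v})
      = (\<Sum>\<pi>\<in>Perms. measure lborel (A \<pi>) / (7/8 - 1/2)) / fact k"
    unfolding GCR_prob_def Perms_def A_def ..
  also have "\<dots> = (\<Sum>\<pi>\<in>Perms. measure lborel (A \<pi>)) * (8/3) / fact k"
    by (simp add: sum_divide_distrib[symmetric] sum_distrib_right)
  also have "\<dots> = 8/3 * (xe * lemma4_LP_obj q \<omega> \<kappa>)"
    unfolding meas objval by simp
  also have "\<dots> \<le> 8/3 * (xe * A_LP q)"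
    using objle xepos by simp
  finally have "GCR_prob k (1/2) (7/8) (\<lambda>\<rho> \<pi>. mistake (GenColorRound k x dflt \<rho> \<pi>) ell {u, v})
      \<le> 8/3 * A_LP q * xE {u, v}" unfolding xe_def e_def by (simp add: ac_simps)
  then show ?thesis using p1 q6 by simp
qed

end
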